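(* Let $\mathbb{H}$ be one of $\mathbb{Z}$, $\mathbb{N}$, $\mathbb{N}^+$. Every upper quasi-density $\mu^\ast$ on $\mathbb{H}$ has the strong Darboux property: for all $X,Y\subseteq\mathbb{H}$ with $X\subseteq Y$ and every real $a$ with $\mu^\ast(X)\le a\le \mu^\ast(Y)$, there exists $A$ with $X\subseteq A\subseteq Y$ and $\mu^\ast(A)=a$. In particular, this holds for every upper density on $\mathbb{H}$.
   Context: $\mathbb{N}=\{0,1,2,\dots\}$, $\mathbb{N}^+=\{1,2,\dots\}$. $\mathbb{H}$ denotes one of $\mathbb{Z}$, $\mathbb{N}$, $\mathbb{N}^+$. For $X\subseteq\mathbb{H}$, $k\in\mathbb{N}^+$, $h\in\mathbb{N}$, write $k\cdot X+h:=\{kx+h: x\in X\}$. An upper quasi-density on $\mathbb{H}$ is a function $\mu^\ast:\mathcal{P}(\mathbb{H})\to\mathbb{R}$ such that: (i) $\mu^\ast(\mathbb{H})=1$; (ii) $\mu^\ast(X)\le 1$ for all $X\subseteq\mathbb{H}$; (iii) $\mu^\ast(X\cup Y)\le\mu^\ast(X)+\mu^\ast(Y)$ for all $X,Y\subseteq\mathbb{H}$; (iv) $\mu^\ast(k\cdot X+h)=\frac1k\mu^\ast(X)$ for all $X\subseteq\mathbb{H}$ and $h,k\in\mathbb{N}^+$. An upper density is an upper quasi-density that is moreover monotone ($X\subseteq Y\Rightarrow \mu^\ast(X)\le\mu^\ast(Y)$). A function $f:\mathcal{P}(S)\to\mathbb{R}$ has the strong Darboux property if for all $X\subseteq Y\subseteq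 S$ and every $a\in[f(X),f(Y)]$ there is $A$ with $X\subseteq A\subseteq Y$ and $f(A)=a$ (if $f(Y)<f(X)$ the interval is empty and the condition is vacuous). *)

theory Defs
  imports Complex_Main
begin

definition admissible_H :: "int set \<Rightarrow> bool" where
  "admissible_H H \<longleftrightarrow> H = UNIV \<or> H = {0..} \<or> H = {1..}"

definition dil_shift :: "nat \<Rightarrow> nat \<Rightarrow> int set \<Rightarrow> int set" where
  "dil_shift k h X = (\<lambda>x. int k * x + int h) ` X"

text \<open>Upper quasi-density on H; mu is only constrained on subsets of H (its domain P(H)).\<close>
definition upper_quasi_density :: "int set \<Rightarrow> (int set \<Rightarrow> real) \<Rightarrow> bool" where
  "upper_quasi_density H mu \<longleftrightarrow>
     mu H = 1 \<and>
     (\<forall>X. X \<subseteq> H \<longrightarrow> mu X \<le> 1) \<and>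
     (\<forall>X Y. X \<subseteq> H \<longrightarrow> Y \<subseteq> H \<longrightarrow> mu (X \<union> Y) \<le> mu X + mu Y) \<and>
     (\<forall>X h k. X \<subseteq> H \<longrightarrow> 0 < h \<longrightarrow> 0 < k \<longrightarrow> mu (dil_shift k h X) = mu X / real k)"

definition upper_density :: "int set \<Rightarrow> (int set \<Rightarrow> real) \<Rightarrow> bool" where
  "upper_density H mu \<longleftrightarrow> upper_quasi_density H mu \<and>
     (\<forall>X Y. X \<subseteq> Y \<longrightarrow> Y \<subseteq> H \<longrightarrow> mu X \<le> mu Y)"

definition strong_darboux :: "'a set \<Rightarrow> ('a set \<Rightarrow> real) \<Rightarrow> bool" where
  "strong_darboux S f \<longleftrightarrow>
     (\<forall>X Y a. X \<subseteq> Y \<longrightarrow> Y \<subseteq> S \<longrightarrow> f X \<le> a \<longrightarrow> a \<le> f Y \<longrightarrow>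
        (\<exists>A. X \<subseteq> A \<and> A \<subseteq> Y \<and> f A = a))"

end

theory Submission
  imports Defs
begin

fun rho :: "nat \<Rightarrow> int \<Rightarrow> int" where
  "rho 0 n = 0"
| "rho (Suc m) n = 2 * rho m n + (n div 2^m) mod 2"

lemma rho_bounds: "0 \<le> rho m n \<and> rho m n < 2^m"
  by (induction m) auto

lemma rho_inj: "rho m n = rho m n' \<Longrightarrow> n mod 2^m = n' mod 2^m"
proof (induction m)
  case 0 then show ?case by simp
next
  case (Suc m)
  have b: "0 \<le> (n div 2^m) mod 2" "(n div 2^m) mod 2 < 2" "0 \<le> (n' div 2^m) mod 2" "(n' div 2^m) mod 2 < 2" by auto
  from Suc.prems have e: "2 * rho m n + (n div 2^m) mod 2 = 2 * rho m n' + (n' div 2^m) mod 2" by simp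
  have aux: "\<And>a b a' b'::int. 2*a + b = 2*a' + b' \<Longrightarrow> 0\<le>b \<Longrightarrow> b<2 \<Longrightarrow> 0\<le>b' \<Longrightarrow> b'<2 \<Longrightarrow> b = b' \<and> a = a'" by presburger
  have "(n div 2^m) mod 2 = (n' div 2^m) mod 2 \<and> rho m n = rho m n'" using aux[OF e b] .
  moreover have "\<And>a::int. a mod 2^Suc m = 2^m * (a div 2^m mod 2) + a mod 2^m"
    using mod_mult2_eq' [of _ "2 ^ m" 2, where 'a=int] by (simp add: power_Suc2 mult.commute)
  ultimately show ?case using Suc.IH by (metis (no_types, lifting))
qed

lemma rho_left: "rho m n * 2^d \<le> rho (m + d) n"
proof (induction d)
  case 0 then show ?case by simp
next
  case (Suc d)
  have "rho m n * 2^Suc d = 2 * (rho m n * 2^d)" by simp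
  also have "\<dots> \<le> 2 * rho (m+d) n" using Suc by simp
  also have "\<dots> \<le> rho (m + Suc d) n" by simp
  finally show ?case .
qed

lemma rho_right: "rho (m + d) n + 1 \<le> (rho m n + 1) * 2^d"
proof (induction d)
  case 0 then show ?case by simp
next
  case (Suc d)
  have "rho (m + Suc d) n + 1 \<le> 2 * (rho (m+d) n + 1)" by simp
  also have "\<dots> \<le> 2 * ((rho m n + 1) * 2^d)" using Suc by simp
  finally show ?case by simp
qed

definition E :: "real \<Rightarrow> int set" where
  "E t = {n. \<exists>m. real_of_int (rho m n + 1) \<le> t * 2^m}"

lemma E_mono: "s \<le> t \<Longrightarrow> E s \<subseteq> E t"
  unfolding E_def
  by auto (meson order_trans mult_right_mono zero_le_power zero_le_numeral)

lemma E_0: "E 0 = {}"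
proof -
  have "\<not> real_of_int (rho m n + 1) \<le> 0 * 2^m" for m n
    using rho_bounds[of m n] by simp
  hence "n \<notin> E 0" for n unfolding E_def by blast
  thus ?thesis by blast
qed

lemma E_1: "E 1 = UNIV"
  unfolding E_def by (auto intro: exI[of _ 0])

lemma E_below:
  assumes "n \<in> E t" shows "real_of_int (rho m n) < t * 2^m"
proof -
  from assms obtain M where M: "real_of_int (rho M n + 1) \<le> t * 2^M" unfolding E_def by auto
  show ?thesis
  proof (cases "M \<le> m")
    case True
    then obtain d where d: "m = M + d" using le_Suc_ex by blast
    have "rho m n + 1 \<le> (rho M n + 1) * 2^d" using rho_right[of M d n] d by simp
    hence "real_of_int (rho m n + 1) \<le> real_of_int ((rho M n + 1) * 2^d)" by (simp only: of_int_le_iff)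
    hence "real_of_int (rho m n + 1) \<le> real_of_int (rho M n + 1) * 2^d" by simp
    also have "\<dots> \<le> t * 2^M * 2^d" using M by (simp add: mult_right_mono)
    also have "\<dots> = t * 2^m" using d by (simp add: power_add)
    finally show ?thesis by simp
  next
    case False
    then obtain d where d: "M = m + d" by (metis le_Suc_ex nat_le_linear)
    have "rho m n * 2^d \<le> rho M n" using rho_left[of m n d] d by simp
    hence "rho m n * 2^d < rho M n + 1" by simp
    hence "real_of_int (rho m n * 2^d) < real_of_int (rho M n + 1)" by (simp only: of_int_less_iff)
    hence "real_of_int (rho m n) * 2^d < real_of_int (rho M n + 1)" by simp
    also have "\<dots> \<le> t * 2^m * 2^d" using M d by (simp add: power_add mult.assoc)
    finally show ?thesis by simp
  qed
qed

lemma E_key: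
  assumes "t - s \<le> 1 / 2^m" "n \<in> E t" "n \<notin> E s"
  shows "rho m n = \<lfloor>s * 2^m\<rfloor> \<or> rho m n = \<lfloor>s * 2^m\<rfloor> + 1"
proof -
  have a: "real_of_int (rho m n) < t * 2^m" using E_below assms(2) .
  have "t * 2^m \<le> s * 2^m + 1" using assms(1) by (simp add: field_simps)
  hence a': "real_of_int (rho m n) < s * 2^m + 1" using a by simp
  have b: "s * 2^m < real_of_int (rho m n + 1)" using assms(3) unfolding E_def by (auto simp: not_le)
  show ?thesis using a' b by linarith
qed

lemma adm_add: "admissible_H H \<Longrightarrow> x \<in> H \<Longrightarrow> x + int j \<in> H"
  unfolding admissible_H_def by auto

lemma uqd_sub:
  assumes "upper_quasi_density H mu" "X \<subseteq> H" "Y \<subseteq> H" shows "mu (X \<union> Y) \<le> mu X + mu Y"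
  using assms(1)[unfolded upper_quasi_density_def, THEN conjunct2, THEN conjunct2, THEN conjunct1] assms(2,3)
  by blast

lemma uqd_nonneg:
  assumes "upper_quasi_density H mu" "X \<subseteq> H" shows "0 \<le> mu X"
proof -
  have "mu (X \<union> X) \<le> mu X + mu X" using uqd_sub[OF assms(1,2,2)] .
  thus ?thesis by simp
qed

lemma uqd_dil:
  assumes "upper_quasi_density H mu" "X \<subseteq> H" "0 < h" "0 < k"
  shows "mu (dil_shift k h X) = mu X / real k"
  using assms(1)[unfolded upper_quasi_density_def, THEN conjunct2, THEN conjunct2, THEN conjunct2] assms(2-4)
  by blast

lemma uqd_le1:
  assumes "upper_quasi_density H mu" "X \<subseteq> H" shows "mu X \<le> 1"
  using assms(1)[unfolded upper_quasi_density_def, THEN conjunct2, THEN conjunct1] assms(2)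
  by blast

lemma uqd_empty:
  assumes "upper_quasi_density H mu" shows "mu {} = 0"
proof -
  have "mu (dil_shift 2 1 {}) = mu {} / 2" using uqd_dil[OF assms, of "{}" 1 2] by simp
  thus ?thesis by (simp add: dil_shift_def)
qed

lemma uqd_shift_single:
  assumes "upper_quasi_density H mu" "admissible_H H" "x \<in> H"
  shows "mu {x + int j} = mu {x}"
proof (induction j)
  case 0 then show ?case by simp
next
  case (Suc j)
  have "x + int j \<in> H" using adm_add assms by blast
  hence "mu (dil_shift 1 1 {x + int j}) = mu {x + int j}" using uqd_dil[OF assms(1), of "{x + int j}" 1 1] by simp
  moreover have "dil_shift 1 1 {x + int j} = {x + int (Suc j)}" by (simp add: dil_shift_def)
  ultimately show ?case using Suc by simp
qed

lemma uqd_single: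
  assumes "upper_quasi_density H mu" "admissible_H H" "x \<in> H"
  shows "mu {x} = 0"
proof -
  define y where "y = x + int (nat \<bar>x\<bar>)"
  have y0: "0 \<le> y" unfolding y_def by simp
  have yH: "y \<in> H" unfolding y_def using adm_add assms by blast
  have my: "mu {y} = mu {x}" unfolding y_def using uqd_shift_single[OF assms] by blast
  have "mu (dil_shift 2 1 {y}) = mu {y} / 2" using uqd_dil[OF assms(1), of "{y}" 1 2] yH by simp
  moreover have "dil_shift 2 1 {y} = {y + int (nat (y + 1))}" using y0 by (simp add: dil_shift_def)
  moreover have "mu {y + int (nat (y + 1))} = mu {y}" using uqd_shift_single[OF assms(1,2) yH] .
  ultimately have "mu {y} = 0" by simp
  thus ?thesis using my by simp
qed

lemma uqd_finite:
  assumes "upper_quasi_density H mu" "admissible_H H" "finite F" "F \<subseteq> H"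
  shows "mu F = 0"
proof -
  have "mu F \<le> 0" using assms(3,4)
  proof (induction F rule: finite_induct)
    case empty then show ?case using uqd_empty[OF assms(1)] by simp
  next
    case (insert x F)
    have "mu (insert x F) = mu ({x} \<union> F)" by simp
    also have "\<dots> \<le> mu {x} + mu F" using uqd_sub[OF assms(1), of "{x}" F] insert by auto
    also have "\<dots> \<le> 0" using uqd_single[OF assms(1,2)] insert by auto
    finally show ?case .
  qed
  thus ?thesis using uqd_nonneg[OF assms(1,4)] by simp
qed

lemma uqd_residue:
  assumes "upper_quasi_density H mu" "admissible_H H" "V \<subseteq> H" "0 < K"
    and res: "\<forall>v\<in>V. \<forall>v'\<in>V. v mod int K = v' mod int K"
  shows "mu V \<le> 1 / real K"
proof (cases "V = {}")
  case True then show ?thesis using uqd_empty[OF assms(1)] by simp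
next
  case False
  then obtain v0 where v0: "v0 \<in> V" by blast
  define h :: nat where "h = nat (v0 mod int K) + K"
  have hpos: "0 < h" unfolding h_def using assms(4) by simp
  have hmod: "\<And>v. v \<in> V \<Longrightarrow> (v - int h) mod int K = 0"
  proof -
    fix v assume "v \<in> V"
    hence vK: "v mod int K = v0 mod int K" using res v0 by blast
    have "int h = v0 mod int K + int K" unfolding h_def using assms(4) by simp
    hence hK: "int h mod int K = v0 mod int K" by simp
    have "(v - int h) mod int K = (v mod int K - int h mod int K) mod int K" by (rule mod_diff_eq[symmetric])
    also have "\<dots> = 0" using vK hK by simp
    finally show "(v - int h) mod int K = 0" .
  qed
  define W where "W = {w \<in> H. int K * w + int h \<in> V}"
  define V' where "V' = dil_shift K h W"
  define M where "M = V - V'"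
  have WH: "W \<subseteq> H" unfolding W_def by auto
  have V'V: "V' \<subseteq> V" unfolding V'_def W_def dil_shift_def by auto
  have VU: "V = V' \<union> M" unfolding M_def using V'V by auto
  have Mfin: "finite M"
  proof -
    have "M \<subseteq> {0..<int h + int K}"
    proof
      fix v assume vM: "v \<in> M"
      hence vV: "v \<in> V" unfolding M_def by auto
      define w where "w = (v - int h) div int K"
      have "int K * w + (v - int h) mod int K = v - int h" unfolding w_def by (rule mult_div_mod_eq)
      hence vw: "v = int K * w + int h" using hmod[OF vV] by simp
      have nw: "w \<notin> H"
      proof
        assume "w \<in> H"
        hence "w \<in> W" unfolding W_def using vw vV by auto
        hence "v \<in> V'" unfolding V'_def dil_shift_def using vw by auto
        thus False using vM unfolding M_def by auto
      qed
      have vH: "v \<in> H" using vV assms(3) by auto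
      show "v \<in> {0..<int h + int K}"
      proof (cases "H = UNIV")
        case True then show ?thesis using nw by auto
      next
        case HH: False
        hence H: "H = {0..} \<or> H = {1..}" using assms(2) unfolding admissible_H_def by auto
        hence "0 \<le> v" using vH by auto
        moreover have "v < int h + int K"
        proof (rule ccontr)
          assume "\<not> v < int h + int K"
          hence "int K * 1 \<le> int K * w" using vw by simp
          hence "1 \<le> w" using assms(4) by (simp add: mult_le_cancel_left)
          thus False using nw H by auto
        qed
        ultimately show ?thesis by auto
      qed
    qed
    thus ?thesis using finite_subset by blast
  qed
  have MH: "M \<subseteq> H" unfolding M_def using assms(3) by auto
  have V'H: "V' \<subseteq> H" using V'V assms(3) by auto
  have "mu V \<le> mu V' + mu M" using VU uqd_sub[OF assms(1) V'H MH] by simp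
  also have "mu M = 0" using uqd_finite[OF assms(1,2) Mfin MH] .
  also have "mu V' = mu W / real K" unfolding V'_def using uqd_dil[OF assms(1) WH hpos assms(4)] .
  also have "mu W \<le> 1" using uqd_le1[OF assms(1) WH] .
  finally show ?thesis using assms(4) by (simp add: divide_right_mono)
qed

lemma darboux_real:
  fixes f :: "real \<Rightarrow> real"
  assumes cont: "\<And>e. e > 0 \<Longrightarrow> \<exists>d>0. \<forall>s t. 0 \<le> s \<longrightarrow> s \<le> t \<longrightarrow> t \<le> 1 \<longrightarrow> t - s \<le> d \<longrightarrow> f t \<le> f s + e"
    and f0: "f 0 \<le> a" and f1: "a \<le> f 1"
  shows "\<exists>t. 0 \<le> t \<and> t \<le> 1 \<and> f t = a"
proof -
  define S where "S = {t. 0 \<le> t \<and> t \<le> 1 \<and> f t \<le> a}"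
  have S0: "0 \<in> S" unfolding S_def using f0 by simp
  have Sne: "S \<noteq> {}" using S0 by blast
  have bdd: "bdd_above S" unfolding S_def bdd_above_def by auto
  define \<tau> where "\<tau> = Sup S"
  have t0: "0 \<le> \<tau>" unfolding \<tau>_def using cSup_upper[OF S0 bdd] .
  have t1: "\<tau> \<le> 1" unfolding \<tau>_def using Sne by (intro cSup_least) (auto simp: S_def)
  have le: "f \<tau> \<le> a"
  proof (rule ccontr)
    assume "\<not> f \<tau> \<le> a"
    hence e: "(f \<tau> - a) / 2 > 0" by simp
    obtain d where d: "d > 0" and hd: "\<forall>s t. 0 \<le> s \<longrightarrow> s \<le> t \<longrightarrow> t \<le> 1 \<longrightarrow> t - s \<le> d \<longrightarrow> f t \<le> f s + (f \<tau> - a) / 2"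
      using cont[OF e] by blast
    have "\<tau> - d < Sup S" using d \<tau>_def by simp
    then obtain s where s: "s \<in> S" "\<tau> - d < s" using less_cSup_iff[OF Sne bdd] by blast
    have "s \<le> \<tau>" unfolding \<tau>_def using cSup_upper[OF s(1) bdd] .
    hence "f \<tau> \<le> f s + (f \<tau> - a) / 2" using hd s t1 unfolding S_def by auto
    moreover have "f s \<le> a" using s unfolding S_def by auto
    ultimately have "f \<tau> \<le> a + (f \<tau> - a) / 2" by linarith
    thus False using \<open>\<not> f \<tau> \<le> a\<close> by (simp add: field_simps)
  qed
  have ge: "a \<le> f \<tau>"
  proof (rule ccontr)
    assume A: "\<not> a \<le> f \<tau>"
    show False
    proof (cases "\<tau> = 1")
      case True then show False using A f1 by simp
    next
      case False
      hence t1': "\<tau> < 1" using t1 by simp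
      have e: "(a - f \<tau>) / 2 > 0" using A by simp
      obtain d where d: "d > 0" and hd: "\<forall>s t. 0 \<le> s \<longrightarrow> s \<le> t \<longrightarrow> t \<le> 1 \<longrightarrow> t - s \<le> d \<longrightarrow> f t \<le> f s + (a - f \<tau>) / 2"
        using cont[OF e] by blast
      define t where "t = \<tau> + min d (1 - \<tau>)"
      have "t \<le> 1" "\<tau> \<le> t" "t - \<tau> \<le> d" "\<tau> < t" unfolding t_def using t1' d by auto
      hence "f t \<le> f \<tau> + (a - f \<tau>) / 2" using hd t0 by auto
      hence "f t \<le> a" using A by (simp add: field_simps)
      hence "t \<in> S" unfolding S_def using A \<open>t \<le> 1\<close> \<open>\<tau> \<le> t\<close> t0 by auto
      hence "t \<le> \<tau>" unfolding \<tau>_def using cSup_upper[OF _ bdd] by blast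
      thus False using \<open>\<tau> < t\<close> by simp
    qed
  qed
  show ?thesis using le ge t0 t1 by (intro exI[of _ \<tau>]) auto
qed

lemma uqd_darboux:
  assumes uqd: "upper_quasi_density H mu" and adm: "admissible_H H"
  shows "strong_darboux H mu"
  unfolding strong_darboux_def
proof (intro allI impI)
  fix X Y a assume XY: "X \<subseteq> Y" and YH: "Y \<subseteq> H" and aX: "mu X \<le> a" and aY: "a \<le> mu Y"
  define Z where "Z = Y - X"
  define A where "A t = X \<union> (Z \<inter> E t)" for t
  define f where "f t = mu (A t)" for t
  have AXY: "X \<subseteq> A t \<and> A t \<subseteq> Y" for t unfolding A_def Z_def using XY by auto
  have AH: "A t \<subseteq> H" for t using AXY YH by blast
  have f0: "f 0 = mu X" unfolding f_def A_def E_0 by simp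
  have f1: "f 1 = mu Y" unfolding f_def A_def E_1 Z_def using XY by (simp add: Un_absorb1 Un_Diff_cancel)
  have step: "f t \<le> f s + 2 / 2^m" if st: "s \<le> t" "t - s \<le> 1 / 2^m" for s t m
  proof -
    define j where "j = \<lfloor>s * 2^m\<rfloor>"
    define D1 where "D1 = {n \<in> Z \<inter> E t. n \<notin> E s \<and> rho m n = j}"
    define D2 where "D2 = {n \<in> Z \<inter> E t. n \<notin> E s \<and> rho m n = j + 1}"
    have key: "\<And>n. n \<in> E t \<Longrightarrow> n \<notin> E s \<Longrightarrow> rho m n = j \<or> rho m n = j + 1"
      unfolding j_def by (rule E_key[OF st(2)])
    have mono: "E s \<subseteq> E t" using E_mono[OF st(1)] .
    have eq: "A t = A s \<union> (D1 \<union> D2)"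
      unfolding A_def D1_def D2_def using key mono by auto
    have D1H: "D1 \<subseteq> H" and D2H: "D2 \<subseteq> H" unfolding D1_def D2_def Z_def using YH by auto
    have K: "(0::nat) < 2^m" by simp
    have r1: "mu D1 \<le> 1 / real (2^m)"
    proof (rule uqd_residue[OF uqd adm D1H K], intro ballI)
      fix v v' assume "v \<in> D1" "v' \<in> D1"
      hence "rho m v = rho m v'" unfolding D1_def by auto
      hence "v mod 2^m = v' mod 2^m" by (rule rho_inj)
      thus "v mod int (2^m) = v' mod int (2^m)" by simp
    qed
    have r2: "mu D2 \<le> 1 / real (2^m)"
    proof (rule uqd_residue[OF uqd adm D2H K], intro ballI)
      fix v v' assume "v \<in> D2" "v' \<in> D2"
      hence "rho m v = rho m v'" unfolding D2_def by auto
      hence "v mod 2^m = v' mod 2^m" by (rule rho_inj)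
      thus "v mod int (2^m) = v' mod int (2^m)" by simp
    qed
    have DH: "D1 \<union> D2 \<subseteq> H" using D1H D2H by auto
    have "f t \<le> f s + mu (D1 \<union> D2)" unfolding f_def eq
      using uqd_sub[OF uqd AH[of s] DH] .
    also have "mu (D1 \<union> D2) \<le> mu D1 + mu D2" using uqd_sub[OF uqd D1H D2H] .
    finally show ?thesis using r1 r2 by simp
  qed
  have cont: "\<exists>d>0. \<forall>s t. 0 \<le> s \<longrightarrow> s \<le> t \<longrightarrow> t \<le> 1 \<longrightarrow> t - s \<le> d \<longrightarrow> f t \<le> f s + e"
    if e: "e > 0" for e
  proof -
    have "\<exists>m. (1/2::real) ^ m < e / 2" by (rule real_arch_pow_inv) (use e in simp_all)
    then obtain m where m: "(1/2::real) ^ m < e / 2" by blast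
    have "2 / (2::real)^m < e" using m by (simp add: power_divide field_simps)
    hence "\<forall>s t. 0 \<le> s \<longrightarrow> s \<le> t \<longrightarrow> t \<le> 1 \<longrightarrow> t - s \<le> 1 / 2^m \<longrightarrow> f t \<le> f s + e"
    proof (intro allI impI)
      fix s t :: real assume "2 / 2^m < e" "s \<le> t" "t - s \<le> 1 / 2^m"
      have "f t \<le> f s + 2 / 2^m" using step \<open>s \<le> t\<close> \<open>t - s \<le> 1 / 2^m\<close> .
      thus "f t \<le> f s + e" using \<open>2 / 2^m < e\<close> by linarith
    qed
    moreover have "(0::real) < 1 / 2^m" by simp
    ultimately show ?thesis by blast
  qed
  have "f 0 \<le> a" "a \<le> f 1" using f0 f1 aX aY by simp_all
  from darboux_real[OF cont this] obtain t where "f t = a" by blast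
  thus "\<exists>A. X \<subseteq> A \<and> A \<subseteq> Y \<and> mu A = a" using AXY unfolding f_def by blast
qed

theorem mainTheorem1:
  fixes H :: "int set"
  assumes "admissible_H H"
  shows "\<forall>mu. (upper_quasi_density H mu \<longrightarrow> strong_darboux H mu) \<and>
              (upper_density H mu \<longrightarrow> strong_darboux H mu)"
  using uqd_darboux[OF _ assms] unfolding upper_density_def by blast

end
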